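(* For $n\ge2$ and all $P,Q\in\Gamma_n$, $\frac18 J(P\|Q)\le T(P\|Q)$.
   Context: $\Gamma_n=\{P=(p_1,\dots,p_n): p_i>0,\ \sum p_i=1\}$. $J(P\|Q)=\sum_{i=1}^n(p_i-q_i)\ln\frac{p_i}{q_i}$; $T(P\|Q)=\sum_{i=1}^n\frac{p_i+q_i}{2}\ln\frac{p_i+q_i}{2\sqrt{p_iq_i}}$ (natural logarithm). *)

theory Defs
  imports Complex_Main
begin

definition Gamma :: "nat \<Rightarrow> (nat \<Rightarrow> real) set" where
  "Gamma n = {p. (\<forall>i<n. p i > 0) \<and> (\<Sum>i<n. p i) = 1}"

definition J_div :: "nat \<Rightarrow> (nat \<Rightarrow> real) \<Rightarrow> (nat \<Rightarrow> real) \<Rightarrow> real" where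
  "J_div n p q = (\<Sum>i<n. (p i - q i) * ln (p i / q i))"

definition T_div :: "nat \<Rightarrow> (nat \<Rightarrow> real) \<Rightarrow> (nat \<Rightarrow> real) \<Rightarrow> real" where
  "T_div n p q = (\<Sum>i<n. (p i + q i) / 2 * ln ((p i + q i) / (2 * sqrt (p i * q i))))"

end

theory Submission
  imports Defs
begin

lemma sq1: "(0::real) < x^2 + 1" by (smt (verit) zero_le_power2)

lemma mono_aux:
  fixes f f' :: "real \<Rightarrow> real" and a b :: real
  assumes "a \<le> b" and d: "\<And>x. a \<le> x \<Longrightarrow> x \<le> b \<Longrightarrow> DERIV f x :> f' x"
    and nn: "\<And>x. a < x \<Longrightarrow> x < b \<Longrightarrow> f' x \<ge> 0"
  shows "f a \<le> f b"
proof (rule DERIV_nonneg_imp_increasing_open[OF assms(1)])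
  show "\<And>x. a < x \<Longrightarrow> x < b \<Longrightarrow> \<exists>y. DERIV f x :> y \<and> y \<ge> 0"
    using d nn by (meson less_imp_le)
  show "continuous_on {a..b} f"
    by (rule continuous_at_imp_continuous_on) (metis DERIV_isCont atLeastAtMost_iff d)
qed

lemma k_mono:
  fixes y :: real assumes "0 < y"
  shows "(y \<ge> 1 \<longrightarrow> y - 1/y - 2 * ln y \<ge> 0) \<and> (y \<le> 1 \<longrightarrow> y - 1/y - 2 * ln y \<le> 0)"
proof -
  let ?k = "\<lambda>y::real. y - 1/y - 2 * ln y"
  let ?k' = "\<lambda>y::real. 1 + 1/y^2 - 2/y"
  have d: "DERIV ?k x :> ?k' x" if "x > 0" for x
    using that by (auto intro!: derivative_eq_intros simp: power2_eq_square field_simps)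
  have nn: "?k' x \<ge> 0" if "x > 0" for x
  proof -
    have "?k' x = (1 - 1/x)^2" using that by (simp add: power2_eq_square field_simps)
    thus ?thesis by simp
  qed
  have 1: "?k 1 \<le> ?k y" if "y \<ge> 1"
    by (rule mono_aux[OF that]) (auto intro!: d nn)
  have 2: "?k y \<le> ?k 1" if "y \<le> 1"
    by (rule mono_aux[OF that]) (use assms in \<open>auto intro!: d nn\<close>)
  show ?thesis using 1 2 by auto
qed

lemma rat_id:
  fixes x :: real assumes x: "x > 0"
  shows "2*x/(x^2+1) - 1/x - 1/x * ((x^2-1)/(2*(x^2+1))) = (x^2 - 1) / (2 * x * (x^2 + 1))"
proof -
  have p: "x^2 + 1 > 0" by (rule sq1)
  have "\<And>s. x*x = s - 1 \<Longrightarrow> s > 0 \<Longrightarrow> 2*x/s - 1/x - 1/x * ((s - 2)/(2*s)) = (s - 2) / (2 * x * s)"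
    using x by (simp add: field_simps)
  from this[of "x^2+1"] p show ?thesis by (simp add: power2_eq_square)
qed

lemma dr:
  fixes x :: real assumes x: "x > 0"
  shows "DERIV (\<lambda>x. (x^2-1)/(2*(x^2+1))) x :> 2*x/(x^2+1)^2"
proof -
  have p: "x^2 + 1 > 0" by (rule sq1)
  have q: "x^2 + 1 \<noteq> 0" using p by linarith
  have e: "(\<lambda>x::real. (x^2-1)/(2*(x^2+1))) = (\<lambda>x. 1/2 - inverse (x^2+1))"
  proof
    fix y :: real
    have "y^2 + 1 > 0" by (rule sq1)
    then show "(y^2-1)/(2*(y^2+1)) = 1/2 - inverse (y^2+1)" by (simp add: field_simps)
  qed
  show ?thesis unfolding e
    apply (rule derivative_eq_intros refl | (use q in simp; fail))+
    using q by (simp add: field_simps power2_eq_square)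
qed

lemma dl:
  fixes x :: real
  shows "DERIV (\<lambda>x. ln (x^2 + 1)) x :> 2*x/(x^2+1)"
proof -
  have p: "x^2 + 1 > 0" by (rule sq1)
  show ?thesis
    apply (rule derivative_eq_intros refl | (use p in simp; fail))+
    done
qed

lemma G_nonneg:
  fixes x :: real assumes "0 < x"
  shows "ln x * (x^2 - 1) / (2 * (x^2 + 1)) \<le> ln ((x^2 + 1) / (2 * x))"
proof -
  let ?G = "\<lambda>x::real. ln (x^2 + 1) - ln 2 - ln x - ln x * ((x^2 - 1) / (2 * (x^2 + 1)))"
  let ?G' = "\<lambda>x::real. (x^2 - 1) / (2 * x * (x^2 + 1)) - ln x * (2 * x / (x^2 + 1)^2)"
  have d: "DERIV ?G x :> ?G' x" if "x > 0" for x
  proof -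
    have "DERIV ?G x :> 2*x/(x^2+1) - 0 - 1/x - (1/x * ((x^2 - 1) / (2 * (x^2 + 1))) + (2 * x / (x^2 + 1)^2) * ln x)"
      by (intro DERIV_diff DERIV_mult dl dr DERIV_const DERIV_ln_divide that)
    moreover have "2*x/(x^2+1) - 0 - 1/x - (1/x * ((x^2 - 1) / (2 * (x^2 + 1))) + (2 * x / (x^2 + 1)^2) * ln x) = ?G' x"
    proof -
      have "(2 * x / (x^2 + 1)^2) * ln x = ln x * (2 * x / (x^2 + 1)^2)" by (rule mult.commute)
      then show ?thesis using rat_id[OF that] by linarith
    qed
    ultimately show ?thesis by simp
  qed
  have sgn: "?G' x = (x^2 - 1/x^2 - 2 * ln (x^2)) * x / (2 * (x^2 + 1)^2)" if "x > 0" for x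
  proof -
    have p: "x^2 + 1 > 0" by (rule sq1)
    have "\<And>s. x*x = s - 1 \<Longrightarrow> s > 0 \<Longrightarrow> (s - 2) / (2 * x * s) - ln x * (2 * x / s^2)
       = (s - 1 - 1/(s-1) - 4 * ln x) * x / (2 * s^2)"
      using that by (simp add: field_simps power2_eq_square)
    from this[of "x^2+1"] p that show ?thesis by (simp add: power2_eq_square ln_mult)
  qed
  have nn: "?G' x \<ge> 0" if "x \<ge> 1" for x
  proof -
    have "x^2 \<ge> 1" using that by (simp add: one_le_power)
    hence "x^2 - 1/x^2 - 2 * ln (x^2) \<ge> 0" using k_mono[of "x^2"] that by simp
    thus ?thesis using sgn[of x] that by simp
  qed
  have np: "?G' x \<le> 0" if "x > 0" "x \<le> 1" for x
  proof -
    have "x^2 \<le> 1" using that by (simp add: power_le_one)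
    hence "x^2 - 1/x^2 - 2 * ln (x^2) \<le> 0" using k_mono[of "x^2"] that by simp
    hence "(x^2 - 1/x^2 - 2 * ln (x^2)) * x \<le> 0" using that by (simp add: mult_nonpos_nonneg)
    moreover have "2 * (x^2 + 1)^2 > 0" using sq1[of x] by simp
    ultimately have "(x^2 - 1/x^2 - 2 * ln (x^2)) * x / (2 * (x^2 + 1)^2) \<le> 0" by (rule divide_nonpos_pos)
    thus ?thesis using sgn[of x] that by simp
  qed
  have G1: "?G 1 = 0" by simp
  have "?G 1 \<le> ?G x"
  proof (cases "x \<ge> 1")
    case True
    show ?thesis
      apply (rule mono_aux[OF True, where f' = "?G'"])
       apply (rule d, simp)
      apply (rule nn, simp)
      done
  next
    case False
    have "(\<lambda>t. - ?G t) x \<le> (\<lambda>t. - ?G t) 1"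
      apply (rule mono_aux[where a = x and b = 1 and f = "\<lambda>t. - ?G t" and f' = "\<lambda>t. - ?G' t"])
        apply (use False in simp)
       apply (rule DERIV_minus, rule d, use assms in simp)
      using np assms by (smt (verit))
    thus ?thesis by simp
  qed
  moreover have "ln ((x^2 + 1) / (2 * x)) = ln (x^2 + 1) - ln 2 - ln x"
    using assms sq1[of x] by (simp add: ln_div ln_mult)
  ultimately show ?thesis using G1 by simp
qed

lemma pw:
  fixes a b :: real assumes a: "a > 0" and b: "b > 0"
  shows "(a - b) * ln (a / b) / 8 \<le> (a + b) / 2 * ln ((a + b) / (2 * sqrt (a * b)))"
proof -
  define u where "u = sqrt a"
  define v where "v = sqrt b"
  have u: "u > 0" and v: "v > 0" using a b by (auto simp: u_def v_def)
  have au: "a = u^2" and bv: "b = v^2" using a b by (auto simp: u_def v_def)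
  define x where "x = u / v"
  have x: "x > 0" using u v by (simp add: x_def)
  have x2: "x^2 = a / b" by (simp add: x_def au bv power_divide)
  have sq: "sqrt (a * b) = u * v" by (simp add: u_def v_def real_sqrt_mult)
  have "(x^2+1)/(2*x) = (u^2+v^2)/(2*(u*v))"
    unfolding x_def using u v by (simp add: field_simps power2_eq_square)
  hence e1: "(x^2+1)/(2*x) = (a+b)/(2*sqrt(a*b))" using sq au bv by simp
  have e2: "ln (a/b) = 2 * ln x" using x x2 by (metis ln_realpow of_nat_numeral)
  have e3: "(x^2-1)/(2*(x^2+1)) = (a-b)/(2*(a+b))"
  proof -
    have 1: "a/b - 1 = (a-b)/b" "a/b + 1 = (a+b)/b" using b by (simp_all add: field_simps)
    have "((a-b)/b)/(2*((a+b)/b)) = (a-b)/(2*(a+b))" using b by simp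
    then show ?thesis unfolding x2 1 .
  qed
  have "ln x * ((x^2 - 1) / (2 * (x^2 + 1))) \<le> ln ((x^2 + 1) / (2 * x))"
    using G_nonneg[OF x] by simp
  hence "ln x * ((a-b)/(2*(a+b))) \<le> ln ((a+b)/(2*sqrt(a*b)))" by (simp only: e1 e3)
  hence "(a+b)/2 * (ln x * ((a-b)/(2*(a+b)))) \<le> (a+b)/2 * ln ((a+b)/(2*sqrt(a*b)))"
    by (rule mult_left_mono) (use a b in simp)
  moreover have "(a+b)/2 * (ln x * ((a-b)/(2*(a+b)))) = (a - b) * ln (a / b) / 8"
    unfolding e2 using a b by (simp add: field_simps)
  ultimately show ?thesis by linarith
qed

theorem proposition3p4:
  fixes n :: nat and p q :: "nat \<Rightarrow> real"
  assumes "n \<ge> 2" and "p \<in> Gamma n" and "q \<in> Gamma n"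
  shows "J_div n p q / 8 \<le> T_div n p q"
proof -
  have pp: "\<And>i. i < n \<Longrightarrow> p i > 0" and qq: "\<And>i. i < n \<Longrightarrow> q i > 0"
    using assms(2,3) by (auto simp: Gamma_def)
  have "J_div n p q / 8 = (\<Sum>i<n. (p i - q i) * ln (p i / q i) / 8)"
    by (simp add: J_div_def sum_divide_distrib)
  also have "\<dots> \<le> T_div n p q"
    unfolding T_div_def by (rule sum_mono) (metis pw pp qq lessThan_iff)
  finally show ?thesis .
qed

end
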